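(* Let $T$ be a tower gadget of height $h\in\mathbb{N}$ contained in a graph $G$ (connected to the rest of $G$ only through $v$ and $w$), and let $M$ be a perfect matching of $G$ such that $T$ is in locked state with respect to $M$. If $(P_1,\dots,P_d)$ is a well-behaved flip sequence for $T$ starting from $M$ such that $T$ is in default state with respect to $M\triangle P_1\triangle\cdots\triangle P_d$, then $d\ge 2h-2$.
   Context: A tower gadget of height $h$ is the induced subgraph on vertices $\{v,w\}\cup\{a_i,b_i: 0\le i\le h\}$ with edge set $\{va_0,b_0w\}\cup\{a_ib_i:0\le i\le h\}\cup\{a_ia_{i-1},b_ib_{i-1}:1\le i\le h\}$. With respect to an edge set $M$: $T$ is in default state if $\{va_0,b_0w\}\cup\{a_ib_i:1\le i\le h\}\subseteq M$; $T$ is locked if $\{va_0,b_0w\}\cup\{a_ib_i:1\le i\le h-2\}\cup\{a_ha_{h-1},b_hb_{h-1}\}\subseteq M$; $T$ is in semi-default state if $va_0,b_0w\in M$. A path is alternating w.r.t. an edge set $S$ if its consecutive edges alternate between belonging and not belonging to $S$ (it may start or end with either kind). A well-behaved flip sequence for $T$ starting from $M$ is a sequence $(P_1,\dots,P_d)$ where each $P_i$ is a path from $v$ to $w$ inside $T$ that is alternating with respect to $M\triangle P_1\triangle\cdots\triangle P_{i-1}$ ($\triangle$ = symmetric difference). *)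

theory Defs
  imports Main
begin

definition symdiff :: "'a set \<Rightarrow> 'a set \<Rightarrow> 'a set" where
  "symdiff A B = (A - B) \<union> (B - A)"

definition simple_graph :: "'v set \<Rightarrow> 'v set set \<Rightarrow> bool" where
  "simple_graph V E \<longleftrightarrow> (\<forall>e\<in>E. card e = 2 \<and> e \<subseteq> V)"

definition perfect_matching :: "'v set \<Rightarrow> 'v set set \<Rightarrow> 'v set set \<Rightarrow> bool" where
  "perfect_matching V E M \<longleftrightarrow> M \<subseteq> E \<and> (\<forall>x\<in>V. \<exists>!e. e \<in> M \<and> x \<in> e)"

definition tower_inner :: "(nat \<Rightarrow> 'v) \<Rightarrow> (nat \<Rightarrow> 'v) \<Rightarrow> nat \<Rightarrow> 'v set" where
  "tower_inner a b h = a ` {0..h} \<union> b ` {0..h}"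

definition tower_verts :: "'v \<Rightarrow> 'v \<Rightarrow> (nat \<Rightarrow> 'v) \<Rightarrow> (nat \<Rightarrow> 'v) \<Rightarrow> nat \<Rightarrow> 'v set" where
  "tower_verts v w a b h = {v, w} \<union> tower_inner a b h"

definition tower_edges :: "'v \<Rightarrow> 'v \<Rightarrow> (nat \<Rightarrow> 'v) \<Rightarrow> (nat \<Rightarrow> 'v) \<Rightarrow> nat \<Rightarrow> 'v set set" where
  "tower_edges v w a b h =
     {{v, a 0}, {b 0, w}} \<union> {{a i, b i} | i. i \<le> h}
     \<union> {{a i, a (i - 1)} | i. 1 \<le> i \<and> i \<le> h} \<union> {{b i, b (i - 1)} | i. 1 \<le> i \<and> i \<le> h}"

definition tower_in_graph :: "'v set \<Rightarrow> 'v set set \<Rightarrow> 'v \<Rightarrow> 'v \<Rightarrow> (nat \<Rightarrow> 'v) \<Rightarrow> (nat \<Rightarrow> 'v) \<Rightarrow> nat \<Rightarrow> bool" where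
  "tower_in_graph V E v w a b h \<longleftrightarrow>
     inj_on a {0..h} \<and> inj_on b {0..h} \<and> a ` {0..h} \<inter> b ` {0..h} = {} \<and>
     v \<noteq> w \<and> v \<notin> tower_inner a b h \<and> w \<notin> tower_inner a b h \<and>
     tower_verts v w a b h \<subseteq> V \<and>
     {e \<in> E. e \<subseteq> tower_verts v w a b h} = tower_edges v w a b h \<and>
     (\<forall>e\<in>E. e \<inter> tower_inner a b h \<noteq> {} \<longrightarrow> e \<subseteq> tower_verts v w a b h)"

definition default_state :: "'v \<Rightarrow> 'v \<Rightarrow> (nat \<Rightarrow> 'v) \<Rightarrow> (nat \<Rightarrow> 'v) \<Rightarrow> nat \<Rightarrow> 'v set set \<Rightarrow> bool" where
  "default_state v w a b h M \<longleftrightarrow>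
     {{v, a 0}, {b 0, w}} \<union> {{a i, b i} | i. 1 \<le> i \<and> i \<le> h} \<subseteq> M"

definition locked_state :: "'v \<Rightarrow> 'v \<Rightarrow> (nat \<Rightarrow> 'v) \<Rightarrow> (nat \<Rightarrow> 'v) \<Rightarrow> nat \<Rightarrow> 'v set set \<Rightarrow> bool" where
  "locked_state v w a b h M \<longleftrightarrow>
     {{v, a 0}, {b 0, w}} \<union> {{a i, b i} | i. 1 \<le> i \<and> i \<le> h - 2}
       \<union> {{a h, a (h - 1)}, {b h, b (h - 1)}} \<subseteq> M"

definition path_edges :: "'v list \<Rightarrow> 'v set set" where
  "path_edges ps = {{ps ! i, ps ! Suc i} | i. Suc i < length ps}"

definition is_path_in :: "'v set set \<Rightarrow> 'v \<Rightarrow> 'v \<Rightarrow> 'v list \<Rightarrow> bool" where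
  "is_path_in F x y ps \<longleftrightarrow> ps \<noteq> [] \<and> hd ps = x \<and> last ps = y \<and> distinct ps \<and>
     (\<forall>i. Suc i < length ps \<longrightarrow> {ps ! i, ps ! Suc i} \<in> F)"

definition alternating :: "'v set set \<Rightarrow> 'v list \<Rightarrow> bool" where
  "alternating S ps \<longleftrightarrow>
     (\<forall>i. Suc (Suc i) < length ps \<longrightarrow>
        ({ps ! i, ps ! Suc i} \<in> S) \<noteq> ({ps ! Suc i, ps ! Suc (Suc i)} \<in> S))"

definition flipped :: "'v set set \<Rightarrow> 'v list list \<Rightarrow> nat \<Rightarrow> 'v set set" where
  "flipped M Ps k = foldl symdiff M (map path_edges (take k Ps))"

definition well_behaved_flip_seq ::
  "'v \<Rightarrow> 'v \<Rightarrow> (nat \<Rightarrow> 'v) \<Rightarrow> (nat \<Rightarrow> 'v) \<Rightarrow> nat \<Rightarrow> 'v set set \<Rightarrow> 'v list list \<Rightarrow> bool" where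
  "well_behaved_flip_seq v w a b h M Ps \<longleftrightarrow>
     (\<forall>i < length Ps. is_path_in (tower_edges v w a b h) v w (Ps ! i) \<and>
                      alternating (flipped M Ps i) (Ps ! i))"

end

theory Submission imports Defs begin

locale tower =
  fixes v w :: 'v and a b :: "nat \<Rightarrow> 'v" and h :: nat
  assumes ainj: "inj_on a {0..h}" and binj: "inj_on b {0..h}"
    and abdisj: "a ` {0..h} \<inter> b ` {0..h} = {}" and vw: "v \<noteq> w"
    and vin: "v \<notin> tower_inner a b h" and win: "w \<notin> tower_inner a b h"
begin

lemma aeq: "i \<le> h \<Longrightarrow> j \<le> h \<Longrightarrow> (a i = a j) = (i = j)"
  using ainj by (auto simp: inj_on_def)
lemma beq: "i \<le> h \<Longrightarrow> j \<le> h \<Longrightarrow> (b i = b j) = (i = j)"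
  using binj by (auto simp: inj_on_def)
lemma abne: "i \<le> h \<Longrightarrow> j \<le> h \<Longrightarrow> a i \<noteq> b j"
  proof
  assume "i \<le> h" "j \<le> h" "a i = b j"
  hence "a i \<in> a ` {0..h} \<inter> b ` {0..h}" by (metis IntI atLeastAtMost_iff image_eqI le0)
  thus False using abdisj by blast
qed
lemma abne'[simp]: "i \<le> h \<Longrightarrow> j \<le> h \<Longrightarrow> a i \<noteq> b j" "i \<le> h \<Longrightarrow> j \<le> h \<Longrightarrow> b j \<noteq> a i"
  using abne by metis+
lemma avw[simp]: "i \<le> h \<Longrightarrow> a i \<noteq> v" "i \<le> h \<Longrightarrow> a i \<noteq> w" "i \<le> h \<Longrightarrow> b i \<noteq> v"
  "i \<le> h \<Longrightarrow> b i \<noteq> w"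
  "i \<le> h \<Longrightarrow> v \<noteq> a i" "i \<le> h \<Longrightarrow> w \<noteq> a i" "i \<le> h \<Longrightarrow> v \<noteq> b i"
  "i \<le> h \<Longrightarrow> w \<noteq> b i"
  using vin win by (auto simp: tower_inner_def)

lemma te_iff: "e \<in> tower_edges v w a b h \<longleftrightarrow> e = {v, a 0} \<or> e = {b 0, w} \<or> (\<exists>i\<le>h. e = {a i, b i})
   \<or> (\<exists>i. 1 \<le> i \<and> i \<le> h \<and> e = {a i, a (i - 1)}) \<or> (\<exists>i. 1 \<le> i \<and> i \<le> h \<and> e = {b i, b (i - 1)})"
  unfolding tower_edges_def by blast

lemma nbrV: "{v, y} \<in> tower_edges v w a b h \<Longrightarrow> y = a 0"
  unfolding te_iff using vw by (auto simp: doubleton_eq_iff)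

lemma nbrA: assumes "k \<le> h" "{a k, y} \<in> tower_edges v w a b h"
  shows "(k = 0 \<and> y = v) \<or> y = b k \<or> (0 < k \<and> y = a (k - 1)) \<or> (k < h \<and> y = a (Suc k))"
  using assms(2) unfolding te_iff
proof (elim disjE exE conjE)
  assume "{a k, y} = {v, a 0}" thus ?thesis using assms by (auto simp: doubleton_eq_iff aeq assms)
next
  assume "{a k, y} = {b 0, w}" thus ?thesis using assms by (auto simp: doubleton_eq_iff)
next
  fix i assume "i \<le> h" "{a k, y} = {a i, b i}" thus ?thesis using assms by (auto simp: doubleton_eq_iff aeq assms)
next
  fix i assume "1 \<le> i" "i \<le> h" "{a k, y} = {a i, a (i - 1)}" thus ?thesis
    by (auto simp: doubleton_eq_iff aeq assms)
next
  fix i assume "1 \<le> i" "i \<le> h" "{a k, y} = {b i, b (i - 1)}" thus ?thesis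
    using assms by (auto simp: doubleton_eq_iff)
qed

lemma nbrB: assumes "k \<le> h" "{b k, y} \<in> tower_edges v w a b h"
  shows "(k = 0 \<and> y = w) \<or> y = a k \<or> (0 < k \<and> y = b (k - 1)) \<or> (k < h \<and> y = b (Suc k))"
  using assms(2) unfolding te_iff
proof (elim disjE exE conjE)
  assume "{b k, y} = {v, a 0}" thus ?thesis using assms by (auto simp: doubleton_eq_iff)
next
  assume "{b k, y} = {b 0, w}" thus ?thesis using assms by (auto simp: doubleton_eq_iff beq assms)
next
  fix i assume "i \<le> h" "{b k, y} = {a i, b i}" thus ?thesis using assms by (auto simp: doubleton_eq_iff beq assms)
next
  fix i assume "1 \<le> i" "i \<le> h" "{b k, y} = {a i, a (i - 1)}" thus ?thesis
    using assms by (auto simp: doubleton_eq_iff)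
next
  fix i assume "1 \<le> i" "i \<le> h" "{b k, y} = {b i, b (i - 1)}" thus ?thesis
    by (auto simp: doubleton_eq_iff beq assms)
qed


lemma path_shape:
  assumes P: "is_path_in (tower_edges v w a b h) v w ps"
  shows "\<exists>t\<le>h. length ps = 2*t+4 \<and> (\<forall>i\<le>t. ps!(Suc i) = a i) \<and> (\<forall>j\<le>t. ps!(t+2+j) = b (t-j))
            \<and> ps!0 = v \<and> ps!(2*t+3) = w"
proof -
  let ?E = "tower_edges v w a b h"
  define n where "n = length ps"
  from P have ne: "ps \<noteq> []" and hd: "hd ps = v" and lst: "last ps = w" and dist: "distinct ps"
    and edge: "\<And>i. Suc i < n \<Longrightarrow> {ps!i, ps!Suc i} \<in> ?E" unfolding is_path_in_def n_def by auto
  have p0: "ps!0 = v" using ne hd by (simp add: hd_conv_nth)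
  have pn: "ps!(n-1) = w" using ne lst by (simp add: last_conv_nth n_def)
  have n1: "n \<ge> 1" using ne n_def by (cases ps) auto
  have deq: "\<And>i j. i < n \<Longrightarrow> j < n \<Longrightarrow> ps!i = ps!j \<longleftrightarrow> i = j"
    using dist n_def by (simp add: nth_eq_iff_index_eq)
  have n2: "1 < n"
  proof (rule ccontr)
    assume "\<not> 1 < n" then have "n = 1" using n1 by simp
    then show False using p0 pn vw by simp
  qed
  have p1: "ps!1 = a 0" using edge[of 0] n2 p0 nbrV by simp
  define Q where "Q t \<longleftrightarrow> t \<le> h \<and> Suc t < n \<and> (\<forall>i\<le>t. ps!(Suc i) = a i)" for t
  have Q0: "Q 0" using p1 n2 by (simp add: Q_def)
  define t where "t = (GREATEST t. Q t)"
  have Qt: "Q t" unfolding t_def by (rule GreatestI_nat[where P=Q and k=0 and b=h, OF Q0]) (auto simp: Q_def)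
  have tmax: "\<not> Q (Suc t)"
  proof
    assume "Q (Suc t)" hence "Suc t \<le> t" unfolding t_def by (rule Greatest_le_nat[where P=Q and b=h]) (auto simp: Q_def)
    thus False by simp
  qed
  from Qt have th: "t \<le> h" and tn: "Suc t < n" and pa: "\<And>i. i \<le> t \<Longrightarrow> ps!(Suc i) = a i"
    by (auto simp: Q_def)
  have tn2: "t+2 < n"
  proof (rule ccontr)
    assume "\<not> t+2 < n" hence "Suc t = n - 1" using tn by simp
    then have "a t = w" using pa[of t] pn by simp
    thus False using th by simp
  qed
  have pt2: "ps!(t+2) = b t"
  proof -
    have e: "{a t, ps!(t+2)} \<in> ?E" using edge[of "Suc t"] tn2 pa[of t] by simp
    from nbrA[OF th e] consider "t = 0 \<and> ps!(t+2) = v" | "ps!(t+2) = b t"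
      | "0<t \<and> ps!(t+2) = a (t-1)" | "t<h \<and> ps!(t+2) = a (Suc t)" by blast
    then show ?thesis
    proof cases
      case 1 then show ?thesis using deq[of "t+2" 0] p0 tn2 by auto
    next
      case 2 then show ?thesis .
    next
      case 3 then have "ps!(t+2) = ps!(Suc (t-1))" using pa[of "t-1"] by simp
      then show ?thesis using deq[of "t+2" "Suc(t-1)"] tn2 3 by auto
    next
      case 4 then have "Q (Suc t)" using tn2 pa by (auto simp: Q_def le_Suc_eq)
      then show ?thesis using tmax by simp
    qed
  qed
  have noU: False if U0: "Suc t \<le> h" "t+3 < n" "ps!(t+3) = b (Suc t)"
  proof -
    define U where "U j \<longleftrightarrow> (\<exists>k. t < k \<and> k \<le> h \<and> (ps!j = a k \<or> ps!j = b k))" for j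
    have "U j" if "t+3 \<le> j" "j < n" for j
      using that
    proof (induction j rule: dec_induct)
      case base then show ?case using U0 unfolding U_def by auto
    next
      case (step j)
      from step.IH step.prems obtain k where k: "t<k" "k\<le>h" "ps!j = a k \<or> ps!j = b k"
        unfolding U_def by auto
      have e: "{ps!j, ps!Suc j} \<in> ?E" using edge step.prems by simp
      have sj: "ps!Suc j \<noteq> ps!Suc t" "ps!Suc j \<noteq> ps!(t+2)" using step deq tn tn2 by auto
      from k(3) show ?case
      proof
        assume A: "ps!j = a k"
        from nbrA[OF k(2)] e A consider "k = 0" | "ps!Suc j = b k"
          | "0<k \<and> ps!Suc j = a (k-1)" | "k<h \<and> ps!Suc j = a (Suc k)" by auto
        then show ?case
        proof cases
          case 3
          show ?thesis
          proof (cases "t < k - 1")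
            case True then show ?thesis using 3 k unfolding U_def by (intro exI[of _ "k-1"]) auto
          next
            case False then have "k - 1 = t" using k by simp
            then show ?thesis using 3 sj pa[of t] by simp
          qed
        qed (use k in \<open>auto simp: U_def intro: exI[of _ "Suc k"]\<close>)
      next
        assume A: "ps!j = b k"
        from nbrB[OF k(2)] e A consider "k = 0" | "ps!Suc j = a k"
          | "0<k \<and> ps!Suc j = b (k-1)" | "k<h \<and> ps!Suc j = b (Suc k)" by auto
        then show ?case
        proof cases
          case 3
          show ?thesis
          proof (cases "t < k - 1")
            case True then show ?thesis using 3 k unfolding U_def by (intro exI[of _ "k-1"]) auto
          next
            case False then have "k - 1 = t" using k by simp
            then show ?thesis using 3 sj pt2 by simp
          qed
        qed (use k in \<open>auto simp: U_def intro: exI[of _ "Suc k"]\<close>)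
      qed
    qed
    then have "U (n-1)" using that by auto
    then show False using pn unfolding U_def by auto
  qed
  have pb: "t+2+j < n \<and> ps!(t+2+j) = b (t-j)" if "j \<le> t" for j
    using that
  proof (induction j rule: less_induct)
    case (less j)
    show ?case
    proof (cases j)
      case 0 then show ?thesis using tn2 pt2 by simp
    next
      case (Suc j')
      note jS = Suc
      with less have jt: "j' < t" and IH: "t+2+j' < n" "ps!(t+2+j') = b(t-j')" by auto
      define m where "m = t - j'"
      have mh: "m \<le> h" using th m_def by simp
      have nxt: "t+3+j' < n"
      proof (rule ccontr)
        assume "\<not> t+3+j' < n" hence "t+2+j' = n-1" using IH by simp
        hence "b m = w" using IH pn m_def by simp
        thus False using mh by simp
      qed
      have e: "{b m, ps!(Suc (t+2+j'))} \<in> ?E" using edge[of "t+2+j'"] nxt IH m_def by simp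
      from nbrB[OF mh e] consider "m = 0" | "ps!(Suc(t+2+j')) = a m"
        | "0 < m \<and> ps!(Suc(t+2+j')) = b (m - 1)" | "m < h \<and> ps!(Suc(t+2+j')) = b (Suc m)" by auto
      then show ?thesis
      proof cases
        case 1 then show ?thesis using jt m_def by simp
      next
        case 2
        have "ps!(Suc m) = a m" using pa[of m] m_def by simp
        then have "Suc (t+2+j') = Suc m" using 2 deq[of "Suc (t+2+j')" "Suc m"] nxt m_def tn by simp
        then show ?thesis using m_def by simp
      next
        case 3 then show ?thesis using nxt Suc m_def by (simp add: Suc_diff_Suc)
      next
        case 4
        show ?thesis
        proof (cases j')
          case 0 then show ?thesis using noU 4 nxt m_def by (auto simp: numeral_3_eq_3)
        next
          case (Suc j'')
          have "ps!(t+2+j'') = b(t-j'')" using less.IH[of j''] jS Suc less.prems by auto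
          moreover have "t - j'' = Suc m" using Suc m_def jt by simp
          ultimately have "ps!(Suc(t+2+j')) = ps!(t+2+j'')" using 4 by simp
          then show ?thesis using deq[of "Suc(t+2+j')" "t+2+j''"] nxt Suc by simp
        qed
      qed
    qed
  qed
  have b0: "ps!(2*t+2) = b 0" and l0: "2*t+2 < n" using pb[of t] by (auto simp: mult_2)
  have n3: "2*t+3 < n"
  proof (rule ccontr)
    assume "\<not> 2*t+3 < n" hence "2*t+2 = n-1" using l0 by simp
    thus False using b0 pn by simp
  qed
  have e: "{b 0, ps!(Suc (2*t+2))} \<in> ?E" using edge[of "2*t+2"] n3 b0 by simp
  from nbrB[OF _ e] consider "ps!(Suc (2*t+2)) = w" | "ps!(Suc (2*t+2)) = a 0"
      | "0 < h \<and> ps!(Suc(2*t+2)) = b 1" by auto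
  then have pw: "ps!(2*t+3) = w"
  proof cases
    case 1
    have "Suc(2*t+2) = 2*t+3" by simp
    with 1 show ?thesis by metis
  next
    case 2 then show ?thesis using p1 deq[of "Suc(2*t+2)" 1] n3 by simp
  next
    case 3
    show ?thesis
    proof (cases t)
      case 0
      have q0: "ps!(Suc(2*t+2)) = b 1" using 3 by simp
      have "Suc(2*t+2) = t+3" "(1::nat) = Suc t" using 0 by simp_all
      with q0 have q: "ps!(t+3) = b (Suc t)" by metis
      have "Suc t \<le> h" "t+3 < n" using 3 n3 0 by auto
      from noU[OF this q] have False .
      then show ?thesis ..
    next
      case (Suc t')
      then have "ps!(t+2+t') = b 1" using pb[of t'] by simp
      then show ?thesis using 3 deq[of "Suc(2*t+2)" "t+2+t'"] n3 Suc by simp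
    qed
  qed
  have eqv: "ps!(n-1) = ps!(2*t+3)" using pw pn by simp
  have "n - 1 < n" using n1 by simp
  from deq[OF this n3] eqv have "n - 1 = 2*t+3" by simp
  then have nn: "length ps = 2*t+4" using n_def by simp
  show ?thesis
  proof (intro exI[of _ t] conjI)
    show "t \<le> h" "length ps = 2*t+4" "ps!0 = v" "ps!(2*t+3) = w" by fact+
    show "\<forall>i\<le>t. ps!(Suc i) = a i" using pa by blast
    show "\<forall>j\<le>t. ps!(t+2+j) = b (t-j)" using pb by blast
  qed
qed


lemma path_props:
  assumes P: "is_path_in (tower_edges v w a b h) v w ps"
  shows "\<exists>t\<le>h. (\<forall>s\<le>h. {a s, b s} \<in> path_edges ps \<longleftrightarrow> s = t)
     \<and> (\<forall>k. Suc k \<le> h \<longrightarrow> ({a k, a (Suc k)} \<in> path_edges ps \<longleftrightarrow> k < t))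
     \<and> (t = h \<longrightarrow> (\<forall>S. alternating S ps \<longrightarrow>
          (\<forall>s. 1 \<le> s \<longrightarrow> s < h \<longrightarrow> ({a (s-1), a s} \<in> S) \<noteq> ({a s, a (Suc s)} \<in> S))))"
proof -
  obtain t where th: "t \<le> h" and len: "length ps = 2*t+4" and pa: "\<And>i. i\<le>t \<Longrightarrow> ps!(Suc i) = a i"
    and pb: "\<And>j. j\<le>t \<Longrightarrow> ps!(t+2+j) = b (t-j)" and p0: "ps!0 = v" and pw: "ps!(2*t+3) = w"
    using path_shape[OF P] by blast
  have "Suc (2*t+2) = 2*t+3" by simp
  with pw have pw': "ps!(Suc (2*t+2)) = w" by metis
  have "ps!(t+2+t) = b 0" using pb[of t] by simp
  moreover have "t+2+t = 2*t+2" by simp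
  ultimately have b0: "ps!(2*t+2) = b 0" by metis
  have "Suc(2*t+2) < 2*t+4" by simp
  then have lastE: "{ps!(2*t+2), ps!(Suc(2*t+2))} \<in> path_edges ps"
    unfolding path_edges_def len by blast
  then have lastE': "{b 0, w} \<in> path_edges ps" unfolding b0 pw' .
  define X where "X = {{v, a 0}, {b 0, w}, {a t, b t}} \<union> {{a i, a (Suc i)} | i. i < t} \<union> {{b i, b (Suc i)} | i. i < t}"
  have edge_i: "{ps!i, ps!Suc i} \<in> X" if "Suc i < 2*t+4" for i
  proof -
    have "i = 0 \<or> (1 \<le> i \<and> i \<le> t) \<or> i = t+1 \<or> (t+2 \<le> i \<and> i \<le> 2*t+1) \<or> i = 2*t+2"
      using that by presburger
    then consider "i = 0" | "1 \<le> i \<and> i \<le> t" | "i = t+1" | "t+2 \<le> i \<and> i \<le> 2*t+1" | "i = 2*t+2"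
      by blast
    then show ?thesis
    proof cases
      case 1 then show ?thesis using p0 pa[of 0] by (simp add: X_def)
    next
      case 2
      have "i-1 \<le> t" "Suc (i-1) = i" using 2 by auto
      then have "ps!i = a (i-1)" using pa[of "i-1"] by metis
      moreover have "ps!Suc i = a (Suc (i-1))" using pa[of i] 2 by simp
      ultimately show ?thesis using 2 unfolding X_def by (intro UnI1 UnI2) (auto intro!: exI[of _ "i-1"])
    next
      case 3
      have "ps!i = a t" using pa[of t] 3 by simp
      moreover have "ps!Suc i = b t" using pb[of 0] 3 by simp
      ultimately show ?thesis by (simp add: X_def)
    next
      case 4
      define j where "j = i - (t+2)"
      have j: "Suc j \<le> t" "i = t+2+j" using 4 j_def by auto
      have "ps!i = b (Suc (t - Suc j))" using pb[of j] j by (simp add: Suc_diff_Suc)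
      moreover have "ps!Suc i = b (t - Suc j)" using pb[of "Suc j"] j by simp
      ultimately have "{ps!i, ps!Suc i} = {b (t - Suc j), b (Suc (t - Suc j))}" by auto
      moreover have "t - Suc j < t" using j by simp
      ultimately show ?thesis unfolding X_def by blast
    next
      case 5
      have "{ps!i, ps!Suc i} = {b 0, w}" unfolding 5 b0 pw' ..
      then show ?thesis by (simp add: X_def)
    qed
  qed
  have inPE: "\<And>i. Suc i < 2*t+4 \<Longrightarrow> {ps!i, ps!Suc i} \<in> path_edges ps"
    unfolding path_edges_def len by blast
  have pe: "path_edges ps = X"
  proof
    show "path_edges ps \<subseteq> X" using edge_i unfolding path_edges_def len by blast
  next
    show "X \<subseteq> path_edges ps"
    proof
      fix e assume "e \<in> X"
      then consider "e = {v, a 0}" | "e = {b 0, w}" | "e = {a t, b t}"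
        | i where "i < t" "e = {a i, a (Suc i)}" | i where "i < t" "e = {b i, b (Suc i)}"
        unfolding X_def by blast
      then show "e \<in> path_edges ps"
      proof cases
        case 1 then show ?thesis using inPE[of 0] p0 pa[of 0] by simp
      next
        case 2 then show ?thesis using lastE' by simp
      next
        case 3 then show ?thesis using inPE[of "Suc t"] pa[of t] pb[of 0] by simp
      next
        case (4 i) then show ?thesis using inPE[of "Suc i"] pa[of i] pa[of "Suc i"] by simp
      next
        case (5 i)
        have "ps!(t+2+(t - Suc i)) = b (Suc i)" using pb[of "t - Suc i"] 5 by simp
        moreover have "ps!(Suc (t+2+(t - Suc i))) = b i" using pb[of "t - i"] 5 by (simp add: Suc_diff_Suc)
        moreover have "Suc (t+2+(t - Suc i)) < 2*t+4" using 5 by simp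
        ultimately show ?thesis using inPE[of "t+2+(t - Suc i)"] 5 by (simp add: insert_commute)
      qed
    qed
  qed
  have R: "\<forall>s\<le>h. {a s, b s} \<in> path_edges ps \<longleftrightarrow> s = t"
    using th unfolding pe X_def by (auto simp: doubleton_eq_iff aeq beq)
  have Vt: "\<forall>k. Suc k \<le> h \<longrightarrow> ({a k, a (Suc k)} \<in> path_edges ps \<longleftrightarrow> k < t)"
    using th unfolding pe X_def by (auto simp: doubleton_eq_iff aeq beq)
  have A: "({a (s-1), a s} \<in> S) \<noteq> ({a s, a (Suc s)} \<in> S)"
    if "t = h" "alternating S ps" "1 \<le> s" "s < h" for S s
  proof -
    have "Suc (Suc s) < length ps" using len that by simp
    then have "({ps!s, ps!Suc s} \<in> S) \<noteq> ({ps!Suc s, ps!Suc (Suc s)} \<in> S)"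
      using that(2) unfolding alternating_def by blast
    moreover have "ps!s = a (s-1)" using pa[of "s-1"] that by simp
    moreover have "ps!Suc s = a s" using pa[of s] that by simp
    moreover have "ps!Suc (Suc s) = a (Suc s)" using pa[of "Suc s"] that by simp
    ultimately show ?thesis by simp
  qed
  show ?thesis using th R Vt A by blast
qed

end

lemma flipped_mem:
  assumes "k \<le> length Ps"
  shows "e \<in> flipped M Ps k \<longleftrightarrow> (e \<in> M) \<noteq> odd (card {i. i < k \<and> e \<in> path_edges (Ps!i)})"
  using assms
proof (induction k)
  case 0 then show ?case by (simp add: flipped_def)
next
  case (Suc k)
  have tk: "take (Suc k) Ps = take k Ps @ [Ps!k]" using Suc.prems by (simp add: take_Suc_conv_app_nth)
  have fl: "flipped M Ps (Suc k) = symdiff (flipped M Ps k) (path_edges (Ps!k))"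
    unfolding flipped_def tk by simp
  show ?case
  proof (cases "e \<in> path_edges (Ps!k)")
    case True
    have st: "{i. i < Suc k \<and> e \<in> path_edges (Ps!i)} = insert k {i. i < k \<and> e \<in> path_edges (Ps!i)}"
      using True by (auto simp: less_Suc_eq)
    show ?thesis using Suc.IH Suc.prems True unfolding fl st by (auto simp: symdiff_def)
  next
    case False
    have st: "{i. i < Suc k \<and> e \<in> path_edges (Ps!i)} = {i. i < k \<and> e \<in> path_edges (Ps!i)}"
      using False by (auto simp: less_Suc_eq)
    show ?thesis using Suc.IH Suc.prems False unfolding fl st by (auto simp: symdiff_def)
  qed
qed

theorem mainTheorem7:
  fixes V :: "'v set" and E :: "'v set set" and M :: "'v set set"
    and v w :: 'v and a b :: "nat \<Rightarrow> 'v" and h :: nat and Ps :: "'v list list"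
  assumes "simple_graph V E"
    and "tower_in_graph V E v w a b h"
    and "perfect_matching V E M"
    and "locked_state v w a b h M"
    and "well_behaved_flip_seq v w a b h M Ps"
    and "default_state v w a b h (flipped M Ps (length Ps))"
  shows "length Ps \<ge> 2 * h - 2"
proof -
  interpret tower v w a b h using assms(2) by unfold_locales (auto simp: tower_in_graph_def)
  define d where "d = length Ps"
  show ?thesis
  proof (cases "2 \<le> h")
    case False then show ?thesis by simp
  next
    case True
    define PE where "PE i = path_edges (Ps!i)" for i
    define cnt where "cnt e = card {i. i < d \<and> e \<in> PE i}" for e
    have fl: "e \<in> flipped M Ps k \<longleftrightarrow> (e \<in> M) \<noteq> odd (card {i. i < k \<and> e \<in> PE i})" if "k \<le> d" for e k
      using flipped_mem[of k Ps e M] that unfolding d_def PE_def by simp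
    have wb: "is_path_in (tower_edges v w a b h) v w (Ps!i)" "alternating (flipped M Ps i) (Ps!i)"
      if "i < d" for i using assms(5) that unfolding well_behaved_flip_seq_def d_def by auto
    have pp: "\<exists>t\<le>h. (\<forall>s\<le>h. {a s, b s} \<in> PE i \<longleftrightarrow> s = t)
     \<and> (\<forall>k. Suc k \<le> h \<longrightarrow> ({a k, a (Suc k)} \<in> PE i \<longleftrightarrow> k < t))
     \<and> (t = h \<longrightarrow> (\<forall>S. alternating S (Ps!i) \<longrightarrow>
          (\<forall>s. 1 \<le> s \<longrightarrow> s < h \<longrightarrow> ({a (s-1), a s} \<in> S) \<noteq> ({a s, a (Suc s)} \<in> S))))"
      if "i < d" for i using path_props[OF wb(1)[OF that]] unfolding PE_def .
    have one_rung: "s = s'" if "i<d" "s\<le>h" "s'\<le>h" "{a s,b s} \<in> PE i" "{a s', b s'} \<in> PE i" for i s s'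
    proof -
      note th0 = that
      obtain t where t: "\<forall>s\<le>h. {a s, b s} \<in> PE i \<longleftrightarrow> s = t"
        using pp[OF th0(1)] by blast
      show ?thesis using t th0 by auto
    qed
    have samev: "({a (s-1), a s} \<in> PE i) = ({a s, a (Suc s)} \<in> PE i)"
      if "i<d" "1 \<le> s" "s<h" "{a s, b s} \<notin> PE i" for i s
    proof -
      note th0 = that
      obtain t where t: "t \<le> h" "\<forall>s\<le>h. {a s, b s} \<in> PE i \<longleftrightarrow> s = t"
        "\<forall>k. Suc k \<le> h \<longrightarrow> ({a k, a (Suc k)} \<in> PE i \<longleftrightarrow> k < t)"
        using pp[OF th0(1)] by blast
      have "s \<noteq> t" using t(2) that by auto
      have "Suc (s-1) = s" using that by simp
      then have "({a (s-1), a s} \<in> PE i) = (s - 1 < t)" using t(3) that by (metis less_imp_le_nat)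
      moreover have "({a s, a (Suc s)} \<in> PE i) = (s < t)" using t(3) that by simp
      ultimately show ?thesis using \<open>s\<noteq>t\<close> that by auto
    qed
    have topalt: "({a (s-1), a s} \<in> flipped M Ps i) \<noteq> ({a s, a (Suc s)} \<in> flipped M Ps i)"
      if "i<d" "1\<le>s" "s<h" "{a h, b h} \<in> PE i" for i s
    proof -
      note th0 = that
      obtain t where t: "t \<le> h" "\<forall>s\<le>h. {a s, b s} \<in> PE i \<longleftrightarrow> s = t"
        "t = h \<longrightarrow> (\<forall>S. alternating S (Ps!i) \<longrightarrow>
          (\<forall>s. 1 \<le> s \<longrightarrow> s < h \<longrightarrow> ({a (s-1), a s} \<in> S) \<noteq> ({a s, a (Suc s)} \<in> S)))"
        using pp[OF th0(1)] by blast
      have "t = h" using t(2) that by auto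
      then show ?thesis using t(3) wb(2)[OF that(1)] that by blast
    qed
    have uniq: "\<And>x. x \<in> V \<Longrightarrow> \<exists>!e. e \<in> M \<and> x \<in> e" using assms(3) unfolding perfect_matching_def by blast
    have notM: "e \<notin> M" if "e' \<in> M" "x \<in> e" "x \<in> e'" "x \<in> V" "e \<noteq> e'" for e e' x
      using uniq[OF that(4)] that by blast
    have aV: "a s \<in> V" if "s \<le> h" for s
      using assms(2) that unfolding tower_in_graph_def tower_verts_def tower_inner_def by auto
    have lock1: "{a s, b s} \<in> M" if "1 \<le> s" "s \<le> h - 2" for s
      using assms(4) that unfolding locked_state_def by blast
    have lock2: "{a h, a (h-1)} \<in> M" using assms(4) unfolding locked_state_def by blast
    have rh: "{a h, b h} \<notin> M"
      by (rule notM[OF lock2, where x="a h"]) (use True in \<open>auto simp: aV doubleton_eq_iff\<close>)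
    have rh1: "{a (h-1), b (h-1)} \<notin> M"
      by (rule notM[OF lock2, where x="a (h-1)"]) (use True in \<open>auto simp: aV doubleton_eq_iff aeq\<close>)
    have v1: "{a (s-1), a s} \<notin> M" if "1 \<le> s" "s \<le> h-2" for s
      by (rule notM[OF lock1[OF that], where x="a s"]) (use that in \<open>auto simp: aV doubleton_eq_iff\<close>)
    have v2: "{a s, a (Suc s)} \<notin> M" if "1 \<le> s" "s \<le> h-2" for s
      by (rule notM[OF lock1[OF that], where x="a s"]) (use that in \<open>auto simp: aV doubleton_eq_iff\<close>)
    have dflt: "{a s, b s} \<in> flipped M Ps d" if "1 \<le> s" "s \<le> h" for s
      using assms(6) that unfolding default_state_def d_def by blast
    have ev: "even (cnt {a s, b s})" if "1 \<le> s" "s \<le> h-2" for s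
      using fl[of d "{a s, b s}"] dflt[of s] lock1[OF that] that unfolding cnt_def by auto
    have od: "odd (cnt {a s, b s})" if "s = h-1 \<or> s = h" for s
    proof -
      have s: "1 \<le> s" "s \<le> h" using that True by auto
      have "{a s, b s} \<notin> M" using that rh rh1 by auto
      then show ?thesis using fl[of d "{a s, b s}"] dflt[OF s] unfolding cnt_def by auto
    qed
    have pos: "cnt {a s, b s} \<noteq> 0" if "1 \<le> s" "s \<le> h-2" for s
    proof
      assume "cnt {a s, b s} = 0"
      then have none: "\<forall>i<d. {a s, b s} \<notin> PE i" unfolding cnt_def by auto
      have "cnt {a h, b h} \<noteq> 0" using od[of h] by (metis even_zero)
      then obtain i where i: "i < d" "{a h, b h} \<in> PE i" unfolding cnt_def
        by (metis (mono_tags, lifting) Collect_empty_eq card.empty)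
      have "{j. j < i \<and> {a (s-1), a s} \<in> PE j} = {j. j < i \<and> {a s, a (Suc s)} \<in> PE j}"
        using samev none i that by auto
      then have "({a (s-1), a s} \<in> flipped M Ps i) = ({a s, a (Suc s)} \<in> flipped M Ps i)"
        using fl[of i] i v1[OF that] v2[OF that] by simp
      moreover have "s < h" using that True by simp
      ultimately show False using topalt[OF i(1) that(1) _ i(2)] by simp
    qed
    have ge2: "2 \<le> cnt {a s, b s}" if "1 \<le> s" "s \<le> h-2" for s
      using ev[OF that] pos[OF that] by presburger
    have sumle: "(\<Sum>s\<in>{1..h}. cnt {a s, b s}) \<le> d"
    proof -
      have "(\<Sum>s\<in>{1..h}. cnt {a s, b s}) = card (\<Union>s\<in>{1..h}. {i. i < d \<and> {a s, b s} \<in> PE i})"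
        unfolding cnt_def
        by (rule card_UN_disjoint[symmetric]) (auto dest: one_rung)
      also have "\<dots> \<le> card {..<d}" by (rule card_mono) auto
      finally show ?thesis by simp
    qed
    have split: "{1..h} = insert h (insert (h-1) {1..h-2})" using True by auto
    have "(\<Sum>s\<in>{1..h}. cnt {a s, b s}) = cnt {a h, b h} + cnt {a (h-1), b (h-1)} + (\<Sum>s\<in>{1..h-2}. cnt {a s, b s})"
    proof -
      have n1: "h \<notin> insert (h-1) {1..h-2}" "h-1 \<notin> {1..h-2}" using True by auto
      show ?thesis unfolding split using n1 by (simp add: add.assoc)
    qed
    moreover have "(\<Sum>s\<in>{1..h-2}. (2::nat)) \<le> (\<Sum>s\<in>{1..h-2}. cnt {a s, b s})"
      by (rule sum_mono) (use ge2 in auto)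
    moreover have "cnt {a h, b h} \<ge> 1" "cnt {a (h-1), b (h-1)} \<ge> 1" using od[of h] od[of "h-1"] by (metis One_nat_def Suc_leI even_zero neq0_conv)+
    ultimately have "2 * (h-2) + 2 \<le> (\<Sum>s\<in>{1..h}. cnt {a s, b s})" by simp
    then show ?thesis using sumle True unfolding d_def by simp
  qed
qed

end
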